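(* Let $G$ be a finite non-singular graph. Then $\mathcal{A}_{RW}(G)\cong\mathcal{A}(G)$ (as algebras) if and only if $G$ is a regular graph or a biregular graph. Moreover, if $\mathcal{A}_{RW}(G)\not\cong\mathcal{A}(G)$, then the only algebra homomorphism between them is the null map.
   Context: Graphs are simple (no loops or multiple edges) and connected; here $G=(V,E)$ has finitely many vertices $V=\{1,\dots,n\}$. The adjacency matrix is $A=(a_{ij})$ with $a_{ij}=1$ if $i,j$ are neighbors and $0$ otherwise; $G$ is non-singular if $\det A\neq 0$. $\deg(i)$ is the number of neighbors of $i$. $G$ is $d$-regular if every vertex has degree $d$, and regular if it is $d$-regular for some $d$. $G$ is bipartite if $V$ splits into disjoint $V_1,V_2$ with every edge joining $V_1$ to $V_2$; $G$ is biregular if it is bipartite with such a bipartition in which any two vertices on the same side have the same degree. An evolution algebra over $\mathbb{R}$ is an algebra with a basis $\{e_i\}$ (natural basis) such that $e_i\cdot e_j=0$ for $i\ne j$ and $e_i\cdot e_i=\sum_k c_{ik}e_k$. $\mathcal{A}(G)$ has natural basis $\{e_i:i\in V\}$ with $e_i\cdot e_i=\sum_{k\in V}a_{ik}e_k$; $\mathcal{A}_{RW}(G)$ has natural basis $\{e_i:i\in V\}$ with $e_i\cdot e_i=\sum_{k\in V}\frac{a_{ik}}{\deg(i)}e_k$; in both, $e_i\cdot e_j=0$ for $i\neq j$. An isomorphism is a bijective linear map $f$ with $f(u\cdot v)=f(u)\cdot f(v)$. *)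

theory Defs
  imports "HOL-Analysis.Analysis"
begin

definition simple_graph :: "('v::finite \<Rightarrow> 'v \<Rightarrow> bool) \<Rightarrow> bool" where
  "simple_graph E \<longleftrightarrow> (\<forall>i j. E i j \<longleftrightarrow> E j i) \<and> (\<forall>i. \<not> E i i)"

definition connected_graph :: "('v::finite \<Rightarrow> 'v \<Rightarrow> bool) \<Rightarrow> bool" where
  "connected_graph E \<longleftrightarrow> (\<forall>x y. E\<^sup>*\<^sup>* x y)"

definition adj :: "('v::finite \<Rightarrow> 'v \<Rightarrow> bool) \<Rightarrow> 'v \<Rightarrow> 'v \<Rightarrow> real" where
  "adj E i j = (if E i j then 1 else 0)"

definition adj_matrix :: "('v::finite \<Rightarrow> 'v \<Rightarrow> bool) \<Rightarrow> real^'v^'v" where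
  "adj_matrix E = (\<chi> i j. adj E i j)"

definition nonsingular_graph :: "('v::finite \<Rightarrow> 'v \<Rightarrow> bool) \<Rightarrow> bool" where
  "nonsingular_graph E \<longleftrightarrow> det (adj_matrix E) \<noteq> 0"

definition deg :: "('v::finite \<Rightarrow> 'v \<Rightarrow> bool) \<Rightarrow> 'v \<Rightarrow> nat" where
  "deg E i = card {j. E i j}"

definition regular_graph :: "('v::finite \<Rightarrow> 'v \<Rightarrow> bool) \<Rightarrow> bool" where
  "regular_graph E \<longleftrightarrow> (\<exists>d. \<forall>i. deg E i = d)"

definition bipartition :: "('v::finite \<Rightarrow> 'v \<Rightarrow> bool) \<Rightarrow> 'v set \<Rightarrow> 'v set \<Rightarrow> bool" where
  "bipartition E V1 V2 \<longleftrightarrow> V1 \<inter> V2 = {} \<and> V1 \<union> V2 = UNIV \<and>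
     (\<forall>i j. E i j \<longrightarrow> (i \<in> V1 \<and> j \<in> V2) \<or> (i \<in> V2 \<and> j \<in> V1))"

definition biregular_graph :: "('v::finite \<Rightarrow> 'v \<Rightarrow> bool) \<Rightarrow> bool" where
  "biregular_graph E \<longleftrightarrow> (\<exists>V1 V2. bipartition E V1 V2 \<and>
     (\<forall>i\<in>V1. \<forall>j\<in>V1. deg E i = deg E j) \<and> (\<forall>i\<in>V2. \<forall>j\<in>V2. deg E i = deg E j))"

text \<open>Evolution algebra on real^'v with natural basis the standard basis and structure
  constants C: e_i e_i = sum_k C i k e_k, e_i e_j = 0 for i \<noteq> j.\<close>

definition evo_mult :: "('v::finite \<Rightarrow> 'v \<Rightarrow> real) \<Rightarrow> real^'v \<Rightarrow> real^'v \<Rightarrow> real^'v" where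
  "evo_mult C u w = (\<chi> k. \<Sum>i\<in>UNIV. u$i * w$i * C i k)"

text \<open>Structure constants of A(G) and of A_RW(G).\<close>

definition rw_coeffs :: "('v::finite \<Rightarrow> 'v \<Rightarrow> bool) \<Rightarrow> 'v \<Rightarrow> 'v \<Rightarrow> real" where
  "rw_coeffs E i k = adj E i k / real (deg E i)"

definition evo_hom :: "('v::finite \<Rightarrow> 'v \<Rightarrow> real) \<Rightarrow> ('v \<Rightarrow> 'v \<Rightarrow> real) \<Rightarrow> (real^'v \<Rightarrow> real^'v) \<Rightarrow> bool" where
  "evo_hom C1 C2 f \<longleftrightarrow> linear f \<and> (\<forall>u w. f (evo_mult C1 u w) = evo_mult C2 (f u) (f w))"

definition evo_isomorphic :: "('v::finite \<Rightarrow> 'v \<Rightarrow> real) \<Rightarrow> ('v \<Rightarrow> 'v \<Rightarrow> real) \<Rightarrow> bool" where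
  "evo_isomorphic C1 C2 \<longleftrightarrow> (\<exists>f. evo_hom C1 C2 f \<and> bij f)"

end

theory Submission
  imports Defs
begin


lemma adj_left_nonsing:
  fixes E :: "'v::finite \<Rightarrow> 'v \<Rightarrow> bool"
  assumes ns: "nonsingular_graph E" and h: "\<forall>k. (\<Sum>m\<in>UNIV. w m * adj E m k) = 0"
  shows "w m = 0"
proof -
  let ?A = "adj_matrix E"
  have "det (transpose ?A) \<noteq> 0" using ns by (simp add: nonsingular_graph_def det_transpose)
  then have "invertible (transpose ?A)" by (simp add: invertible_det_nz)
  then have "\<exists>B. B ** transpose ?A = mat 1" by (auto simp: invertible_def)
  then have ker: "\<forall>x. transpose ?A *v x = 0 \<longrightarrow> x = 0" by (simp add: matrix_left_invertible_ker)
  have "transpose ?A *v (\<chi> i. w i) = 0"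
    using h by (simp add: vector_matrix_mult_def adj_matrix_def vec_eq_iff mult.commute)
  then have "(\<chi> i. w i) = (0::real^'v)" using ker by blast
  then show ?thesis by (metis vec_lambda_beta zero_index)
qed


lemma evo_mult_axis:
  "evo_mult C (axis i 1) (axis j 1) = (if i = j then (\<chi> k. C i k) else 0)"
proof -
  have "\<And>k. (\<Sum>m\<in>UNIV. axis i (1::real) $ m * axis j 1 $ m * C m k) = (if i = j then C i k else 0)"
  proof -
    fix k
    have "(\<Sum>m\<in>UNIV. axis i (1::real) $ m * axis j 1 $ m * C m k) = (\<Sum>m\<in>UNIV. if m = i then (if i = j then C i k else 0) else 0)"
      by (rule sum.cong) (auto simp: axis_def)
    then show "?thesis k" by simp
  qed
  then show ?thesis by (simp add: evo_mult_def vec_eq_iff)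
qed

lemma linear_expand:
  fixes f :: "real^'v::finite \<Rightarrow> real^'v"
  assumes "linear f"
  shows "f x = (\<Sum>i\<in>UNIV. x$i *\<^sub>R f (axis i 1))"
proof -
  have "f x = f (\<Sum>i\<in>UNIV. x$i *\<^sub>R axis i 1)"
    using basis_expansion[of x] by (simp add: scalar_mult_eq_scaleR)
  also have "\<dots> = (\<Sum>i\<in>UNIV. x$i *\<^sub>R f (axis i 1))"
    using assms by (simp add: linear_sum linear_scale)
  finally show ?thesis .
qed

lemma hom_structure:
  fixes E :: "'v::finite \<Rightarrow> 'v \<Rightarrow> bool" and f :: "real^'v \<Rightarrow> real^'v"
  assumes conn: "connected_graph E"
    and sym: "\<And>i j. E i j \<Longrightarrow> E j i"
    and pat: "\<And>i k. E i k \<Longrightarrow> C1 i k \<noteq> 0"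
    and ns: "\<And>w. \<forall>k. (\<Sum>m\<in>UNIV. w m * C2 m k) = 0 \<Longrightarrow> \<forall>m. w m = 0"
    and hom: "evo_hom C1 C2 f" and nz: "f \<noteq> (\<lambda>_. 0)"
  shows "\<exists>\<sigma> c. bij \<sigma> \<and> (\<forall>i. c i \<noteq> (0::real)) \<and>
            (\<forall>i k. C1 i k * c k = c i * c i * C2 (\<sigma> i) (\<sigma> k))"
proof -
  define v where "v i = f (axis i 1)" for i
  have lin: "linear f" and mul: "\<And>u w. f (evo_mult C1 u w) = evo_mult C2 (f u) (f w)"
    using hom by (auto simp: evo_hom_def)
  have expand: "\<And>x. f x = (\<Sum>i\<in>UNIV. x$i *\<^sub>R v i)"
    unfolding v_def by (rule linear_expand[OF lin])
  have disj: "v i $ m * v j $ m = 0" if "i \<noteq> j" for i j m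
  proof -
    have "evo_mult C2 (v i) (v j) = 0"
      using mul[of "axis i 1" "axis j 1"] that by (simp add: evo_mult_axis v_def linear_0[OF lin])
    then have "\<forall>k. (\<Sum>m\<in>UNIV. (v i $ m * v j $ m) * C2 m k) = 0"
      by (simp add: evo_mult_def vec_eq_iff)
    then show ?thesis using ns[of "\<lambda>m. v i $ m * v j $ m"] by blast
  qed
  have sq: "(\<Sum>k\<in>UNIV. C1 i k * v k $ m) = (\<Sum>j\<in>UNIV. v i $ j * v i $ j * C2 j m)" for i m
  proof -
    have "f (\<chi> k. C1 i k) = evo_mult C2 (v i) (v i)"
      using mul[of "axis i 1" "axis i 1"] by (simp add: evo_mult_axis v_def)
    then have "(f (\<chi> k. C1 i k)) $ m = (evo_mult C2 (v i) (v i)) $ m" by simp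
    then show ?thesis by (simp add: expand evo_mult_def)
  qed
  have single: "(\<Sum>j\<in>UNIV. C1 i j * v j $ m) = C1 i k * v k $ m" if "v k $ m \<noteq> 0" for i k m
  proof -
    have "(\<Sum>j\<in>UNIV. C1 i j * v j $ m) = (\<Sum>j\<in>UNIV. if j = k then C1 i k * v k $ m else 0)"
    proof (rule sum.cong)
      fix j :: 'v assume "j \<in> UNIV"
      show "C1 i j * v j $ m = (if j = k then C1 i k * v k $ m else 0)"
      proof (cases "j = k")
        case False
        then have "v j $ m * v k $ m = 0" using disj by blast
        then have "v j $ m = 0" using that by simp
        then show ?thesis using False by simp
      qed simp
    qed simp
    then show ?thesis by simp
  qed
  have prop0: "v k = 0" if "v i = 0" "E i k" for i k
  proof (rule ccontr)
    assume "v k \<noteq> 0"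
    then obtain m where m: "v k $ m \<noteq> 0" by (metis vec_eq_iff zero_index)
    have "(\<Sum>k\<in>UNIV. C1 i k * v k $ m) = 0" using sq[of i m] that(1) by simp
    then have "C1 i k * v k $ m = 0" using single[OF m] by simp
    then show False using m pat[OF that(2)] by simp
  qed
  have allnz: "v i \<noteq> 0" for i
  proof
    assume vi: "v i = 0"
    have "v x = 0" for x
    proof -
      have "E\<^sup>*\<^sup>* i x" using conn by (simp add: connected_graph_def)
      then show ?thesis
        by (induction rule: rtranclp_induct) (use vi prop0 in auto)
    qed
    then have "f = (\<lambda>_. 0)" by (simp add: expand fun_eq_iff)
    then show False using nz by simp
  qed
  define \<sigma> where "\<sigma> i = (SOME m. v i $ m \<noteq> 0)" for i
  have sig: "v i $ \<sigma> i \<noteq> 0" for i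
  proof -
    have "\<exists>m. v i $ m \<noteq> 0" using allnz[of i] by (metis vec_eq_iff zero_index)
    then show ?thesis unfolding \<sigma>_def by (rule someI_ex)
  qed
  have inj: "inj \<sigma>"
  proof (rule injI)
    fix i j assume "\<sigma> i = \<sigma> j"
    then show "i = j" using disj[of i j "\<sigma> i"] sig[of i] sig[of j] by auto
  qed
  then have surj: "surj \<sigma>" by (simp add: finite_UNIV_inj_surj)
  have bij: "bij \<sigma>" using inj surj by (simp add: bij_def)
  have supp: "v i $ m = 0" if "m \<noteq> \<sigma> i" for i m
  proof -
    obtain j where j: "m = \<sigma> j" using surj by (metis surjD)
    then have "j \<noteq> i" using that by auto
    then show ?thesis using disj[of i j m] sig[of j] j by auto
  qed
  define c where "c i = v i $ \<sigma> i" for i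
  have "C1 i k * c k = c i * c i * C2 (\<sigma> i) (\<sigma> k)" for i k
  proof -
    have "C1 i k * c k = (\<Sum>j\<in>UNIV. C1 i j * v j $ \<sigma> k)"
      using single[OF sig[of k], of i] by (simp add: c_def)
    also have "\<dots> = (\<Sum>j\<in>UNIV. v i $ j * v i $ j * C2 j (\<sigma> k))" by (rule sq)
    also have "\<dots> = (\<Sum>j\<in>UNIV. if j = \<sigma> i then c i * c i * C2 (\<sigma> i) (\<sigma> k) else 0)"
      by (rule sum.cong) (auto simp: supp c_def)
    also have "\<dots> = c i * c i * C2 (\<sigma> i) (\<sigma> k)" by simp
    finally show ?thesis .
  qed
  then have "bij \<sigma> \<and> (\<forall>i. c i \<noteq> 0) \<and> (\<forall>i k. C1 i k * c k = c i * c i * C2 (\<sigma> i) (\<sigma> k))" using bij sig by (simp add: c_def)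
  then show ?thesis by blast
qed


lemma deg_pos:
  fixes E :: "'v::finite \<Rightarrow> 'v \<Rightarrow> bool"
  assumes ns: "nonsingular_graph E"
  shows "deg E i > 0"
proof (rule ccontr)
  assume "\<not> deg E i > 0"
  then have "{j. E i j} = {}" by (simp add: deg_def)
  then have noE: "\<not> E i k" for k by auto
  let ?w = "\<lambda>m. if m = i then 1 else (0::real)"
  have "(\<Sum>m\<in>UNIV. ?w m * adj E m k) = 0" for k
  proof -
    have "(\<Sum>m\<in>UNIV. ?w m * adj E m k) = (\<Sum>m\<in>UNIV. if m = i then adj E i k else 0)"
      by (rule sum.cong) auto
    then show ?thesis using noE by (simp add: adj_def)
  qed
  then have "?w i = 0" using adj_left_nonsing[OF ns, where w="?w"] by blast
  then show False by simp
qed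

lemma rw_left_nonsing:
  fixes E :: "'v::finite \<Rightarrow> 'v \<Rightarrow> bool"
  assumes ns: "nonsingular_graph E" and h: "\<forall>k. (\<Sum>m\<in>UNIV. w m * rw_coeffs E m k) = 0"
  shows "w m = 0"
proof -
  have "\<forall>k. (\<Sum>m\<in>UNIV. (w m / real (deg E m)) * adj E m k) = 0"
    using h by (simp add: rw_coeffs_def)
  then have "w m / real (deg E m) = 0" using adj_left_nonsing[OF ns, where w="\<lambda>m. w m / real (deg E m)"] by blast
  then show ?thesis using deg_pos[OF ns, of m] by simp
qed

definition PP :: "('v::finite \<Rightarrow> 'v \<Rightarrow> bool) \<Rightarrow> bool" where
  "PP E \<longleftrightarrow> (\<forall>i k j. E i k \<longrightarrow> E i j \<longrightarrow> deg E k = deg E j)"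

lemma PP_iff:
  fixes E :: "'v::finite \<Rightarrow> 'v \<Rightarrow> bool"
  assumes sg: "simple_graph E" and conn: "connected_graph E" and dp: "\<And>i. deg E i > 0"
  shows "PP E \<longleftrightarrow> regular_graph E \<or> biregular_graph E"
proof
  assume P: "PP E"
  have sym: "E i j \<Longrightarrow> E j i" for i j using sg by (simp add: simple_graph_def)
  obtain r :: 'v where True by simp
  have "{j. E r j} \<noteq> {}" using dp[of r] unfolding deg_def by (metis card.empty less_irrefl)
  then obtain s where rs: "E r s" by auto
  define a where "a = deg E r"
  define b where "b = deg E s"
  define Q where "Q x \<longleftrightarrow> (deg E x = a \<and> (\<forall>z. E x z \<longrightarrow> deg E z = b)) \<or>
                          (deg E x = b \<and> (\<forall>z. E x z \<longrightarrow> deg E z = a))" for x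
  have Qall: "Q x" for x
  proof -
    have "E\<^sup>*\<^sup>* r x" using conn by (simp add: connected_graph_def)
    then show ?thesis
    proof (induction rule: rtranclp_induct)
      case base
      then show ?case using P rs unfolding Q_def PP_def a_def b_def by blast
    next
      case (step y z)
      have zy: "E z y" using sym step(2) .
      have "deg E w = deg E y" if "E z w" for w using P zy that unfolding PP_def by blast
      then show ?case using step(3) step(2) unfolding Q_def by auto
    qed
  qed
  show "regular_graph E \<or> biregular_graph E"
  proof (cases "a = b")
    case True
    then have "\<forall>i. deg E i = a" using Qall unfolding Q_def by auto
    then show ?thesis unfolding regular_graph_def by blast
  next
    case False
    let ?V1 = "{x. deg E x = a}" and ?V2 = "{x. deg E x = b}"
    have "bipartition E ?V1 ?V2"
      unfolding bipartition_def using False Qall unfolding Q_def by auto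
    then show ?thesis unfolding biregular_graph_def by force
  qed
next
  assume "regular_graph E \<or> biregular_graph E"
  then show "PP E"
  proof
    assume "regular_graph E" then show ?thesis by (auto simp: regular_graph_def PP_def)
  next
    assume "biregular_graph E"
    then obtain V1 V2 where bp: "bipartition E V1 V2"
      and d1: "\<forall>i\<in>V1. \<forall>j\<in>V1. deg E i = deg E j" and d2: "\<forall>i\<in>V2. \<forall>j\<in>V2. deg E i = deg E j"
      unfolding biregular_graph_def by blast
    show ?thesis unfolding PP_def
    proof (intro allI impI)
      fix i k j assume ik: "E i k" and ij: "E i j"
      from bp have "V1 \<inter> V2 = {}" "\<forall>i j. E i j \<longrightarrow> (i \<in> V1 \<and> j \<in> V2) \<or> (i \<in> V2 \<and> j \<in> V1)"
        unfolding bipartition_def by auto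
      then have "(k \<in> V2 \<and> j \<in> V2) \<or> (k \<in> V1 \<and> j \<in> V1)" using ik ij by blast
      then show "deg E k = deg E j" using d1 d2 by blast
    qed
  qed
qed

lemma powr_key:
  fixes a b :: real
  assumes "a > 0" "b > 0"
  shows "(a powr (-2/3) * b powr (-1/3)) * (a powr (-2/3) * b powr (-1/3)) * a = b powr (-2/3) * a powr (-1/3)"
proof -
  have A1: "a powr (-2/3 + -2/3 + 1) = a powr (-2/3) * a powr (-2/3) * a powr 1" unfolding powr_add by simp
  have A2: "a powr (-2/3 + -2/3 + 1) = a powr (-1/3)" by simp
  have A: "a powr (-2/3) * a powr (-2/3) * a = a powr (-1/3)" using A1 A2 assms by simp
  have B1: "b powr (-1/3 + -1/3) = b powr (-1/3) * b powr (-1/3)" unfolding powr_add by simp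
  have B2: "b powr (-1/3 + -1/3) = b powr (-2/3)" by simp
  have "(a powr (-2/3) * b powr (-1/3)) * (a powr (-2/3) * b powr (-1/3)) * a
      = (a powr (-2/3) * a powr (-2/3) * a) * (b powr (-1/3) * b powr (-1/3))"
    by (simp add: algebra_simps)
  also have "\<dots> = a powr (-1/3) * b powr (-2/3)" using A B1 B2 by simp
  finally show ?thesis by simp
qed

lemma PP_iso:
  fixes E :: "'v::finite \<Rightarrow> 'v \<Rightarrow> bool"
  assumes sg: "simple_graph E" and dp: "\<And>i. deg E i > 0" and P: "PP E"
  shows "evo_isomorphic (rw_coeffs E) (adj E)"
proof -
  have sym: "E i j \<Longrightarrow> E j i" for i j using sg by (simp add: simple_graph_def)
  define d where "d i = real (deg E i)" for i
  define e where "e i = real (deg E (SOME k. E i k))" for i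
  define c where "c i = d i powr (-2/3) * e i powr (-1/3)" for i
  have dpos: "d i > 0" for i using dp[of i] by (simp add: d_def)
  have ex: "\<exists>k. E i k" for i using dp[of i] by (auto simp: deg_def card_gt_0_iff)
  have epos: "e i > 0" for i
    using dp[of "SOME k. E i k"] by (simp add: e_def)
  have cnz: "c i \<noteq> 0" for i using dpos[of i] epos[of i] by (simp add: c_def)
  have ed: "e i = d k" if "E i k" for i k
  proof -
    have "E i (SOME k. E i k)" using ex[of i] by (rule someI_ex)
    then show ?thesis using P that unfolding PP_def e_def d_def by metis
  qed
  have key: "c k / d i = c i * c i" if "E i k" for i k
  proof -
    have "e i = d k" "e k = d i" using ed that sym by auto
    then have "c i * c i * d i = c k"
      using powr_key[OF dpos[of i] dpos[of k]] by (simp add: c_def)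
    then show ?thesis using dpos[of i] by (simp add: field_simps)
  qed
  define f :: "real^'v \<Rightarrow> real^'v" where "f x = (\<chi> i. c i * x$i)" for x
  have lin: "linear f"
    by (rule linearI) (simp_all add: f_def vec_eq_iff algebra_simps)
  have inj: "inj f"
  proof (rule injI)
    fix x y assume "f x = f y"
    then have "c i * x$i = c i * y$i" for i by (simp add: f_def vec_eq_iff)
    then show "x = y" using cnz by (simp add: vec_eq_iff)
  qed
  have surj: "surj f"
  proof (rule surjI)
    fix y show "f (\<chi> i. y$i / c i) = y" using cnz by (simp add: f_def vec_eq_iff)
  qed
  have mul: "f (evo_mult (rw_coeffs E) u w) = evo_mult (adj E) (f u) (f w)" for u w
  proof -
    have "c k * (\<Sum>i\<in>UNIV. u$i * w$i * rw_coeffs E i k) = (\<Sum>i\<in>UNIV. c i * u$i * (c i * w$i) * adj E i k)" for k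
    proof -
      have "c k * (\<Sum>i\<in>UNIV. u$i * w$i * rw_coeffs E i k) = (\<Sum>i\<in>UNIV. u$i * w$i * (c k * rw_coeffs E i k))"
        by (simp add: sum_distrib_left algebra_simps)
      also have "\<dots> = (\<Sum>i\<in>UNIV. c i * u$i * (c i * w$i) * adj E i k)"
      proof (rule sum.cong)
        fix i :: 'v
        have "c k * rw_coeffs E i k = c i * c i * adj E i k"
          using key[of i k] by (auto simp: rw_coeffs_def adj_def d_def)
        then show "u$i * w$i * (c k * rw_coeffs E i k) = c i * u$i * (c i * w$i) * adj E i k"
          by (simp add: algebra_simps)
      qed simp
      finally show ?thesis .
    qed
    then show ?thesis by (simp add: f_def evo_mult_def vec_eq_iff)
  qed
  show ?thesis unfolding evo_isomorphic_def evo_hom_def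
    using lin inj surj mul by (auto simp: bij_def)
qed



lemma hom_rw_adj_PP:
  fixes E :: "'v::finite \<Rightarrow> 'v \<Rightarrow> bool"
  assumes sg: "simple_graph E" and conn: "connected_graph E" and ns: "nonsingular_graph E"
    and hom: "evo_hom (rw_coeffs E) (adj E) f" and nz: "f \<noteq> (\<lambda>_. 0)"
  shows "PP E"
proof -
  have sym: "E i j \<Longrightarrow> E j i" for i j using sg by (simp add: simple_graph_def)
  have dpos: "real (deg E i) > 0" for i using deg_pos[OF ns, of i] by simp
  obtain \<sigma> c where cnz: "\<And>i. c i \<noteq> (0::real)"
    and eq: "\<And>i k. rw_coeffs E i k * c k = c i * c i * adj E (\<sigma> i) (\<sigma> k)"
  proof -
    have "\<exists>\<sigma> c. bij \<sigma> \<and> (\<forall>i. c i \<noteq> (0::real)) \<and>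
            (\<forall>i k. rw_coeffs E i k * c k = c i * c i * adj E (\<sigma> i) (\<sigma> k))"
    proof (rule hom_structure[OF conn sym _ _ hom nz])
      fix i k assume "E i k" then show "rw_coeffs E i k \<noteq> 0"
        using dpos[of i] by (simp add: rw_coeffs_def adj_def)
    next
      fix w :: "'v \<Rightarrow> real" assume "\<forall>k. (\<Sum>m\<in>UNIV. w m * adj E m k) = 0"
      then show "\<forall>m. w m = 0" using adj_left_nonsing[OF ns] by blast
    qed
    then show ?thesis using that by blast
  qed
  have rel: "c k = real (deg E i) * (c i * c i)" if "E i k" for i k
  proof -
    have h: "c k / real (deg E i) = c i * c i * adj E (\<sigma> i) (\<sigma> k)"
      using eq[of i k] that by (simp add: rw_coeffs_def adj_def)
    then have "adj E (\<sigma> i) (\<sigma> k) \<noteq> 0" using cnz[of k] dpos[of i] by auto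
    then have "adj E (\<sigma> i) (\<sigma> k) = 1" by (simp add: adj_def split: if_splits)
    then show ?thesis using h dpos[of i] by (simp add: field_simps)
  qed
  show ?thesis unfolding PP_def
  proof (intro allI impI)
    fix i k j assume ik: "E i k" and ij: "E i j"
    have ckj: "c k = c j" using rel[OF ik] rel[OF ij] by simp
    have "c i = real (deg E k) * (c k * c k)" using rel[OF sym[OF ik]] .
    moreover have "c i = real (deg E j) * (c j * c j)" using rel[OF sym[OF ij]] .
    ultimately have "real (deg E k) * (c k * c k) = real (deg E j) * (c k * c k)" using ckj by auto
    then show "deg E k = deg E j" using cnz[of k] by simp
  qed
qed

lemma hom_adj_rw_PP:
  fixes E :: "'v::finite \<Rightarrow> 'v \<Rightarrow> bool"
  assumes sg: "simple_graph E" and conn: "connected_graph E" and ns: "nonsingular_graph E"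
    and hom: "evo_hom (adj E) (rw_coeffs E) f" and nz: "f \<noteq> (\<lambda>_. 0)"
  shows "PP E"
proof -
  have sym: "E i j \<Longrightarrow> E j i" for i j using sg by (simp add: simple_graph_def)
  have dpos: "real (deg E i) > 0" for i using deg_pos[OF ns, of i] by simp
  obtain \<sigma> c where bij: "bij \<sigma>" and cnz: "\<And>i. c i \<noteq> (0::real)"
    and eq: "\<And>i k. adj E i k * c k = c i * c i * rw_coeffs E (\<sigma> i) (\<sigma> k)"
  proof -
    have "\<exists>\<sigma> c. bij \<sigma> \<and> (\<forall>i. c i \<noteq> (0::real)) \<and>
            (\<forall>i k. adj E i k * c k = c i * c i * rw_coeffs E (\<sigma> i) (\<sigma> k))"
    proof (rule hom_structure[OF conn sym _ _ hom nz])
      fix i k assume "E i k" then show "adj E i k \<noteq> 0"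
        by (simp add: adj_def)
    next
      fix w :: "'v \<Rightarrow> real" assume "\<forall>k. (\<Sum>m\<in>UNIV. w m * rw_coeffs E m k) = 0"
      then show "\<forall>m. w m = 0" using rw_left_nonsing[OF ns] by blast
    qed
    then show ?thesis using that by blast
  qed
  have rel: "E (\<sigma> i) (\<sigma> k) \<and> c k = c i * c i / real (deg E (\<sigma> i))" if "E i k" for i k
  proof -
    have h: "c k = c i * c i * (adj E (\<sigma> i) (\<sigma> k) / real (deg E (\<sigma> i)))"
      using eq[of i k] that by (simp add: rw_coeffs_def adj_def)
    then have "adj E (\<sigma> i) (\<sigma> k) \<noteq> 0" using cnz[of k] by auto
    then have "E (\<sigma> i) (\<sigma> k)" by (simp add: adj_def split: if_splits)
    then show ?thesis using h by (simp add: adj_def)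
  qed
  have inj: "inj \<sigma>" using bij by (simp add: bij_def)
  have le: "deg E i \<le> deg E (\<sigma> i)" for i
    unfolding deg_def
  proof (rule card_inj_on_le)
    show "inj_on \<sigma> {j. E i j}" using inj by (simp add: inj_on_def inj_def)
    show "\<sigma> ` {j. E i j} \<subseteq> {j. E (\<sigma> i) j}" using rel by auto
  qed simp
  have sums: "(\<Sum>i\<in>UNIV. deg E i) = (\<Sum>i\<in>UNIV. deg E (\<sigma> i))"
    using sum.reindex_bij_betw[of \<sigma> UNIV UNIV "deg E"] bij by (simp add: bij_def bij_betw_def)
  have degs: "deg E (\<sigma> i) = deg E i" for i
    using sum_mono_inv[OF sums le] by simp
  show ?thesis unfolding PP_def
  proof (intro allI impI)
    fix i k j assume ik: "E i k" and ij: "E i j"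
    have ckj: "c k = c j" using rel[OF ik] rel[OF ij] by simp
    have "c i = c k * c k / real (deg E k)" using rel[OF sym[OF ik]] degs[of k] by simp
    moreover have "c i = c j * c j / real (deg E j)" using rel[OF sym[OF ij]] degs[of j] by simp
    ultimately have "c k * c k / real (deg E k) = c k * c k / real (deg E j)" using ckj by auto
    then show "deg E k = deg E j" using cnz[of k] dpos[of k] dpos[of j] by (simp add: field_simps)
  qed
qed

theorem theorem2p3:
  fixes E :: "'v::finite \<Rightarrow> 'v \<Rightarrow> bool"
  assumes "simple_graph E" and "connected_graph E" and "nonsingular_graph E"
  shows "(evo_isomorphic (rw_coeffs E) (adj E) \<longleftrightarrow> regular_graph E \<or> biregular_graph E)
    \<and> (\<not> evo_isomorphic (rw_coeffs E) (adj E) \<longrightarrow>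
         (\<forall>f. evo_hom (rw_coeffs E) (adj E) f \<longrightarrow> f = (\<lambda>_. 0)) \<and>
         (\<forall>f. evo_hom (adj E) (rw_coeffs E) f \<longrightarrow> f = (\<lambda>_. 0)))"
proof -
  have dp: "\<And>i. deg E i > 0" using deg_pos[OF assms(3)] .
  have iff: "PP E \<longleftrightarrow> regular_graph E \<or> biregular_graph E" using PP_iff[OF assms(1,2) dp] .
  have isoP: "PP E" if iso: "evo_isomorphic (rw_coeffs E) (adj E)"
  proof -
    obtain f where h: "evo_hom (rw_coeffs E) (adj E) f" and b: "bij f"
      using iso unfolding evo_isomorphic_def by blast
    have "f \<noteq> (\<lambda>_. 0)"
    proof
      assume f0: "f = (\<lambda>_. 0)"
      obtain a :: 'v where True by simp
      have "f 0 = f (axis a 1)" using f0 by simp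
      then have "(0::real^'v) = axis a 1" using b by (simp add: bij_def inj_eq)
      then have "(0::real^'v) $ a = axis a 1 $ a" by simp
      then show False by simp
    qed
    then show ?thesis using hom_rw_adj_PP[OF assms h] by blast
  qed
  have Piso: "PP E \<Longrightarrow> evo_isomorphic (rw_coeffs E) (adj E)" using PP_iso[OF assms(1) dp] by blast
  show ?thesis
    using iff isoP Piso hom_rw_adj_PP[OF assms] hom_adj_rw_PP[OF assms] by blast
qed


end
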